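(* Let $\mathcal{F}^*=\{f\in\bar{\mathcal{F}} : \mathbb{E}_{\theta}[f(Z)]\le C \text{ for all }\theta\in\Theta_0\}$ (the rescaled set $C\cdot\mathcal{E}$ of all $e$-values, within the ambient class), and let $\mathcal{F}'\subseteq\bar{\mathcal{F}}$ be any incentive-aligned menu; assume the attainment assumption holds for both. Assume that for each $\theta\in\Theta_1$ the map $L\mapsto u(\theta,L)$ is affine on $[0,\infty)$. Then for every probability distribution $Q$ on $\Theta$, $$U(Q,\mathcal{F}^* )\ \ge\ U(Q,\mathcal{F}'),$$ regardless of which maximizers the agents select as best responses.
   Context: Let $\Theta$ be a set of types partitioned as $\Theta=\Theta_0\sqcup\Theta_1$ (null and nonnull types), and let $(P_\theta)_{\theta\in\Theta}$ be probability distributions on a measurable space $\mathcal{Z}$; $\mathbb{E}_\theta$ denotes expectation with $Z\sim P_\theta$. Fix a cost $C>0$. Fix an ambient class $\bar{\mathcal{F}}$ of measurable functions $f:\mathcal{Z}\to[0,\infty)$ ("license functions") with $\mathbb{E}_\theta[f(Z)]<\infty$ for all $\theta$. A menu is a subset $\mathcal{F}\subseteq\bar{\mathcal{F}}$; the attainment assumption for $\mathcal{F}$ means that for every $\theta$, $\sup_{f\in\mathcal{F}}\mathbb{E}_\theta[f(Z)]$ is attained when $\mathcal{F}\ne\emptyset$. Agent behavior: an agent of type $\theta$ offered $\mathcal{F}$ opts in ($I=1$) iff $\mathcal{F}\neq\emptyset$ and $\max_{f\in\mathcal{F}}\mathbb{E}_\theta[f(Z)]>C$, in which case it selects some maximizer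 $f^{\mathrm{br}}(\cdot;\theta,\mathcal{F})\in\arg\max_{f\in\mathcal{F}}\mathbb{E}_\theta[f(Z)]$; otherwise it opts out ($I=0$). The realized license is $L=f^{\mathrm{br}}(Z;\theta,\mathcal{F})$ with $Z\sim P_\theta$. The principal's utility is a function $u:\Theta\times[0,\infty)\to\mathbb{R}$ such that: for $\theta\in\Theta_1$, $u(\theta,\cdot)$ is nondecreasing and $u(\theta,L)\ge 0$; for $\theta\in\Theta_0$, $u(\theta,\cdot)$ is nonincreasing, $u(\theta,0)\le0$ and $u(\theta,L)<0$ for all $L>0$. For a probability distribution $Q$ on $\Theta$, $U(Q,\mathcal{F})=\mathbb{E}_{\theta\sim Q}\big[\mathbb{E}_{Z\sim P_\theta}[u(\theta,L)\cdot I\mid\theta]\big]$. A menu $\mathcal{F}$ is incentive-aligned if $\mathbb{E}_\theta[f(Z)]\le C$ for all $\theta\in\Theta_0$ and all $f\in\mathcal{F}$. An $e$-value is a measurable $g\ge 0$ with $\mathbb{E}_\theta[g(Z)]\le 1$ for all $\theta\in\Theta_0$, and $\mathcal{E}$ is the set of $e$-values. *)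

theory Defs
  imports "HOL-Probability.Probability"
begin

definition expect :: "('t \<Rightarrow> 'z measure) \<Rightarrow> 't \<Rightarrow> ('z \<Rightarrow> real) \<Rightarrow> real" where
  "expect P \<theta> f = (\<integral>z. f z \<partial>(P \<theta>))"

definition ambient_ok :: "'z measure \<Rightarrow> ('t \<Rightarrow> 'z measure) \<Rightarrow> ('z \<Rightarrow> real) set \<Rightarrow> bool" where
  "ambient_ok M P Fbar \<longleftrightarrow>
     (\<forall>f\<in>Fbar. f \<in> borel_measurable M \<and> (\<forall>z\<in>space M. 0 \<le> f z) \<and> (\<forall>\<theta>. integrable (P \<theta>) f))"

definition attainment :: "('t \<Rightarrow> 'z measure) \<Rightarrow> ('z \<Rightarrow> real) set \<Rightarrow> bool" where
  "attainment P F \<longleftrightarrow>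
     (\<forall>\<theta>. F \<noteq> {} \<longrightarrow> (\<exists>f\<in>F. \<forall>g\<in>F. expect P \<theta> g \<le> expect P \<theta> f))"

definition opts_in :: "('t \<Rightarrow> 'z measure) \<Rightarrow> real \<Rightarrow> ('z \<Rightarrow> real) set \<Rightarrow> 't \<Rightarrow> bool" where
  "opts_in P C F \<theta> \<longleftrightarrow> F \<noteq> {} \<and> (SUP f\<in>F. expect P \<theta> f) > C"

definition best_response :: "('t \<Rightarrow> 'z measure) \<Rightarrow> real \<Rightarrow> ('z \<Rightarrow> real) set
    \<Rightarrow> ('t \<Rightarrow> 'z \<Rightarrow> real) \<Rightarrow> bool" where
  "best_response P C F br \<longleftrightarrow>
     (\<forall>\<theta>. opts_in P C F \<theta> \<longrightarrow>
        br \<theta> \<in> F \<and> (\<forall>g\<in>F. expect P \<theta> g \<le> expect P \<theta> (br \<theta>)))"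

definition cond_util :: "('t \<Rightarrow> 'z measure) \<Rightarrow> real \<Rightarrow> ('t \<Rightarrow> real \<Rightarrow> real)
    \<Rightarrow> ('z \<Rightarrow> real) set \<Rightarrow> ('t \<Rightarrow> 'z \<Rightarrow> real) \<Rightarrow> 't \<Rightarrow> real" where
  "cond_util P C u F br \<theta> =
     (if opts_in P C F \<theta> then (\<integral>z. u \<theta> (br \<theta> z) \<partial>(P \<theta>)) else 0)"

definition principal_utility :: "'t measure \<Rightarrow> ('t \<Rightarrow> 'z measure) \<Rightarrow> real \<Rightarrow> ('t \<Rightarrow> real \<Rightarrow> real)
    \<Rightarrow> ('z \<Rightarrow> real) set \<Rightarrow> ('t \<Rightarrow> 'z \<Rightarrow> real) \<Rightarrow> real" where
  "principal_utility Q P C u F br = (\<integral>\<theta>. cond_util P C u F br \<theta> \<partial>Q)"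

definition incentive_aligned :: "('t \<Rightarrow> 'z measure) \<Rightarrow> real \<Rightarrow> 't set \<Rightarrow> ('z \<Rightarrow> real) set \<Rightarrow> bool" where
  "incentive_aligned P C \<Theta>0 F \<longleftrightarrow> (\<forall>\<theta>\<in>\<Theta>0. \<forall>f\<in>F. expect P \<theta> f \<le> C)"

definition evalue_menu :: "('t \<Rightarrow> 'z measure) \<Rightarrow> real \<Rightarrow> 't set \<Rightarrow> ('z \<Rightarrow> real) set \<Rightarrow> ('z \<Rightarrow> real) set" where
  "evalue_menu P C \<Theta>0 Fbar = {f\<in>Fbar. \<forall>\<theta>\<in>\<Theta>0. expect P \<theta> f \<le> C}"

text \<open>Standing assumptions on the principal's utility (Theta1 = complement of Theta0).\<close>
definition utility_ok :: "'t set \<Rightarrow> ('t \<Rightarrow> real \<Rightarrow> real) \<Rightarrow> bool" where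
  "utility_ok \<Theta>0 u \<longleftrightarrow>
     (\<forall>\<theta>. \<theta> \<notin> \<Theta>0 \<longrightarrow> mono_on {0..} (u \<theta>) \<and> (\<forall>L\<ge>0. 0 \<le> u \<theta> L)) \<and>
     (\<forall>\<theta>\<in>\<Theta>0. antimono_on {0..} (u \<theta>) \<and> u \<theta> 0 \<le> 0 \<and> (\<forall>L>0. u \<theta> L < 0))"

end

theory Submission
  imports Defs
begin

theorem theorem2p4:
  fixes M :: "'z measure" and P :: "'t \<Rightarrow> 'z measure" and Q :: "'t measure"
    and \<Theta>0 :: "'t set" and C :: real and u :: "'t \<Rightarrow> real \<Rightarrow> real"
    and Fbar F' :: "('z \<Rightarrow> real) set" and br_star br' :: "'t \<Rightarrow> 'z \<Rightarrow> real"
  assumes P_prob: "\<And>\<theta>. prob_space (P \<theta>)" and P_sets: "\<And>\<theta>. sets (P \<theta>) = sets M"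
    and C_pos: "C > 0"
    and ambient: "ambient_ok M P Fbar"
    and u_ok: "utility_ok \<Theta>0 u"
    and u_affine: "\<And>\<theta>. \<theta> \<notin> \<Theta>0 \<Longrightarrow> \<exists>a b. \<forall>L\<ge>0. u \<theta> L = a + b * L"
    and F'_sub: "F' \<subseteq> Fbar"
    and F'_ia: "incentive_aligned P C \<Theta>0 F'"
    and att_star: "attainment P (evalue_menu P C \<Theta>0 Fbar)"
    and att': "attainment P F'"
    and Q_prob: "prob_space Q" and Q_space: "space Q = UNIV"
    and br_star: "best_response P C (evalue_menu P C \<Theta>0 Fbar) br_star"
    and br': "best_response P C F' br'"
    and int_star: "integrable Q (cond_util P C u (evalue_menu P C \<Theta>0 Fbar) br_star)"
    and int': "integrable Q (cond_util P C u F' br')"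
  shows "principal_utility Q P C u (evalue_menu P C \<Theta>0 Fbar) br_star
           \<ge> principal_utility Q P C u F' br'"
proof -
  let ?Fs = "evalue_menu P C \<Theta>0 Fbar"
  have sp: "\<And>\<theta>. space (P \<theta>) = space M" using P_sets sets_eq_imp_space_eq by blast
  have amb: "\<And>f \<theta> z. f \<in> Fbar \<Longrightarrow> z \<in> space (P \<theta>) \<Longrightarrow> 0 \<le> f z"
    "\<And>f \<theta>. f \<in> Fbar \<Longrightarrow> integrable (P \<theta>) f"
    using ambient sp unfolding ambient_ok_def by auto
  have Fs_sub: "?Fs \<subseteq> Fbar" unfolding evalue_menu_def by auto
  have F'Fs: "F' \<subseteq> ?Fs" using F'_sub F'_ia unfolding evalue_menu_def incentive_aligned_def by auto
  have pw: "cond_util P C u F' br' \<theta> \<le> cond_util P C u ?Fs br_star \<theta>" for \<theta>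
  proof (cases "\<theta> \<in> \<Theta>0")
    case True
    have "\<not> opts_in P C ?Fs \<theta>"
    proof
      assume o: "opts_in P C ?Fs \<theta>"
      hence ne: "?Fs \<noteq> {}" unfolding opts_in_def by auto
      have "(SUP f\<in>?Fs. expect P \<theta> f) \<le> C"
        using ne True by (intro cSUP_least) (auto simp: evalue_menu_def)
      thus False using o unfolding opts_in_def by auto
    qed
    moreover have "\<not> opts_in P C F' \<theta>"
    proof
      assume o: "opts_in P C F' \<theta>"
      hence ne: "F' \<noteq> {}" unfolding opts_in_def by auto
      have "(SUP f\<in>F'. expect P \<theta> f) \<le> C"
        using ne True F'_ia by (intro cSUP_least) (auto simp: incentive_aligned_def)
      thus False using o unfolding opts_in_def by auto
    qed
    ultimately show ?thesis unfolding cond_util_def by simp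
  next
    case False
    from u_affine[OF False] obtain a b where ab: "\<forall>L\<ge>0. u \<theta> L = a + b * L" by blast
    have mono: "mono_on {0..} (u \<theta>)" and unn: "\<And>L. L \<ge> 0 \<Longrightarrow> 0 \<le> u \<theta> L"
      using u_ok False unfolding utility_ok_def by auto
    have a0: "a \<ge> 0" using unn[of 0] ab by auto
    have "u \<theta> 0 \<le> u \<theta> 1" using mono by (auto intro: mono_onD)
    hence b0: "b \<ge> 0" using ab by auto
    have intu: "(\<integral>z. u \<theta> (f z) \<partial>P \<theta>) = a + b * expect P \<theta> f" if f: "f \<in> Fbar" for f
    proof -
      interpret prob_space "P \<theta>" by (rule P_prob)
      have "(\<integral>z. u \<theta> (f z) \<partial>P \<theta>) = (\<integral>z. a + b * f z \<partial>P \<theta>)"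
        using amb(1)[OF f] ab by (intro Bochner_Integration.integral_cong) auto
      also have "\<dots> = a + b * expect P \<theta> f"
        using amb(2)[OF f] by (simp add: expect_def prob_space)
      finally show ?thesis .
    qed
    have nn_star: "0 \<le> cond_util P C u ?Fs br_star \<theta>"
    proof (cases "opts_in P C ?Fs \<theta>")
      case True
      hence "br_star \<theta> \<in> Fbar" using br_star Fs_sub unfolding best_response_def by auto
      thus ?thesis using True unfolding cond_util_def
        by (simp add: intu a0 b0 expect_def amb integral_nonneg_AE)
    next
      case False thus ?thesis unfolding cond_util_def by simp
    qed
    show ?thesis
    proof (cases "opts_in P C F' \<theta>")
      case False thus ?thesis using nn_star unfolding cond_util_def by simp
    next
      case o': True
      hence ne: "F' \<noteq> {}" unfolding opts_in_def by auto
      hence neS: "?Fs \<noteq> {}" using F'Fs by auto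
      from att_star neS obtain fm where fm: "fm \<in> ?Fs" "\<forall>g\<in>?Fs. expect P \<theta> g \<le> expect P \<theta> fm"
        unfolding attainment_def by blast
      have bdd: "bdd_above ((\<lambda>f. expect P \<theta> f) ` ?Fs)" using fm by (auto intro: bdd_aboveI2)
      have "(SUP f\<in>F'. expect P \<theta> f) \<le> (SUP f\<in>?Fs. expect P \<theta> f)"
        using ne F'Fs bdd by (intro cSUP_subset_mono) auto
      hence oS: "opts_in P C ?Fs \<theta>" using o' neS unfolding opts_in_def by auto
      have b1: "br' \<theta> \<in> F'" using br' o' unfolding best_response_def by auto
      have b2: "br_star \<theta> \<in> ?Fs" "expect P \<theta> (br' \<theta>) \<le> expect P \<theta> (br_star \<theta>)"
        using br_star oS b1 F'Fs unfolding best_response_def by auto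
      have "cond_util P C u F' br' \<theta> = a + b * expect P \<theta> (br' \<theta>)"
        using o' b1 F'_sub intu unfolding cond_util_def by auto
      also have "\<dots> \<le> a + b * expect P \<theta> (br_star \<theta>)" using b2 b0 by (simp add: mult_left_mono)
      also have "\<dots> = cond_util P C u ?Fs br_star \<theta>"
        using oS b2 Fs_sub intu unfolding cond_util_def by auto
      finally show ?thesis .
    qed
  qed
  show ?thesis unfolding principal_utility_def
    using int_star int' pw by (intro integral_mono) auto
qed

end
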